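(* Let $R$ be a commutative associative ring with unit element, let $b\in R$, and let $m\ge 1$. Let $T_{b+1,b}$ be the symmetric $2m\times 2m$ matrix over $R$ whose diagonal entries are $0$, whose entries in positions $(i,i+1)$ and $(i+1,i)$ ($1\le i\le 2m-1$) equal $b+1$, and all of whose other entries equal $b$. Then $\mathrm{Hf}(T_{b+1,b})=y_m(b)$, where $y_m(x)=\sum_{k=0}^m \frac{(m+k)!}{k!\,(m-k)!}\left(\frac{x}{2}\right)^k=\sum_{k=0}^m \frac{(m+k)!}{k!\,(m-k)!\,2^k}x^k$ is the Bessel polynomial of degree $m$ (its coefficients are integers, so it can be evaluated in $R$).
   Context: For a symmetric matrix $A=(a_{ij})$ of order $n=2m$ over a commutative ring, the hafnian is $\mathrm{Hf}(A)=\sum a_{i_1i_2}a_{i_3i_4}\cdots a_{i_{n-1}i_n}$, where the sum runs over all partitions of $\{1,\dots,n\}$ into $m$ disjoint unordered pairs $\{i_1,i_2\},\dots,\{i_{n-1},i_n\}$ (each partition counted once). Diagonal entries do not enter the definition. *)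

theory Defs
  imports Main
begin

definition perfect_matchings :: "'i set \<Rightarrow> 'i set set set" where
  "perfect_matchings S = {M. (\<forall>p\<in>M. card p = 2 \<and> p \<subseteq> S)
       \<and> (\<forall>p\<in>M. \<forall>q\<in>M. p \<noteq> q \<longrightarrow> p \<inter> q = {}) \<and> \<Union>M = S}"

text \<open>Hafnian of a matrix of order n (indices 0..n-1). For a pair p = {i,j}
  with i<j the factor is A i j (A is symmetric in the intended use).\<close>
definition hafnian :: "nat \<Rightarrow> (nat \<Rightarrow> nat \<Rightarrow> 'a::comm_ring_1) \<Rightarrow> 'a" where
  "hafnian n A = (\<Sum>M\<in>perfect_matchings {0..<n}. \<Prod>p\<in>M. A (Min p) (Max p))"

definition T_mat :: "nat \<Rightarrow> 'a::comm_ring_1 \<Rightarrow> nat \<Rightarrow> nat \<Rightarrow> 'a" where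
  "T_mat n b i j = (if i = j then 0 else if i + 1 = j \<or> j + 1 = i then b + 1 else b)"

text \<open>Bessel polynomial y_m evaluated at x; the coefficient
  (m+k)!/(k!(m-k)!2^k) is an integer, so nat division is exact.\<close>
definition bessel_poly :: "nat \<Rightarrow> 'a::comm_ring_1 \<Rightarrow> 'a" where
  "bessel_poly m x = (\<Sum>k=0..m. of_nat (fact (m + k) div (fact k * fact (m - k) * 2 ^ k)) * x ^ k)"

end

theory Submission
  imports Defs
begin


lemma pm_memD:
  assumes "M \<in> perfect_matchings X"
  shows "\<And>p. p \<in> M \<Longrightarrow> card p = 2 \<and> p \<subseteq> X"
    and "\<And>p q. p \<in> M \<Longrightarrow> q \<in> M \<Longrightarrow> p \<noteq> q \<Longrightarrow> p \<inter> q = {}"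
    and "\<Union>M = X"
  using assms unfolding perfect_matchings_def by auto

lemma pm_empty: "perfect_matchings {} = {{}}"
proof -
  have "M = {}" if "M \<in> perfect_matchings {}" for M :: "'i set set"
  proof (rule ccontr)
    assume "M \<noteq> {}"
    then obtain p where "p \<in> M" by blast
    with pm_memD[OF that] show False by fastforce
  qed
  moreover have "{} \<in> perfect_matchings ({}::'i set)" unfolding perfect_matchings_def by auto
  ultimately show ?thesis by blast
qed

lemma pm_finite: "finite X \<Longrightarrow> finite (perfect_matchings X)"
  by (rule finite_subset[of _ "Pow (Pow X)"]) (auto simp: perfect_matchings_def)

lemma pm_card:
  assumes "M \<in> perfect_matchings X" "finite X"
  shows "card X = 2 * card M" "finite M"
proof -
  show fM: "finite M" using pm_memD[OF assms(1)] assms(2)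
    by (metis Pow_iff finite_Pow_iff finite_subset subsetI)
  have "card (\<Union>M) = sum card M"
    by (rule card_Union_disjoint) (use pm_memD[OF assms(1)] in \<open>auto simp: pairwise_def disjnt_def intro: card_ge_0_finite\<close>)
  also have "\<dots> = sum (\<lambda>_. 2) M" by (rule sum.cong) (use pm_memD[OF assms(1)] in auto)
  finally show "card X = 2 * card M" using pm_memD(3)[OF assms(1)] by simp
qed

lemma pm_insert_bij:
  assumes fin: "finite X" and x: "x \<notin> X"
  shows "bij_betw (\<lambda>(y,M). insert {x,y} M) (Sigma X (\<lambda>y. perfect_matchings (X - {y})))
           (perfect_matchings (insert x X))"
  unfolding bij_betw_def
proof
  show "inj_on (\<lambda>(y,M). insert {x,y} M) (Sigma X (\<lambda>y. perfect_matchings (X - {y})))"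
  proof (rule inj_onI, clarify)
    fix y M y' M'
    assume y: "y \<in> X" and M: "M \<in> perfect_matchings (X - {y})"
      and y': "y' \<in> X" and M': "M' \<in> perfect_matchings (X - {y'})"
      and eq: "insert {x, y} M = insert {x, y'} M'"
    have nx: "x \<notin> \<Union>M" "x \<notin> \<Union>M'" using pm_memD(3)[OF M] pm_memD(3)[OF M'] x by auto
    have "{x,y} \<in> insert {x,y'} M'" using eq by blast
    then have "{x,y} = {x,y'}" using nx by blast
    then have yy: "y = y'" using x y y' by (metis doubleton_eq_iff)
    have "{x,y} \<notin> M" "{x,y'} \<notin> M'" using nx by blast+
    then show "y = y' \<and> M = M'" using eq yy
      by (metis insert_ident)
  qed
next
  show "(\<lambda>(y,M). insert {x,y} M) ` (Sigma X (\<lambda>y. perfect_matchings (X - {y}))) =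
        perfect_matchings (insert x X)"
  proof (intro equalityI subsetI)
    fix N assume "N \<in> (\<lambda>(y,M). insert {x,y} M) ` (Sigma X (\<lambda>y. perfect_matchings (X - {y})))"
    then obtain y M where y: "y \<in> X" and M: "M \<in> perfect_matchings (X - {y})"
      and N: "N = insert {x,y} M" by auto
    note D = pm_memD[OF M]
    have xy: "x \<noteq> y" using x y by auto
    show "N \<in> perfect_matchings (insert x X)"
      unfolding perfect_matchings_def N
    proof (intro CollectI conjI ballI impI)
      fix p assume "p \<in> insert {x,y} M"
      then show "card p = 2" using D(1) xy y by auto
    next
      fix p assume "p \<in> insert {x,y} M"
      then show "p \<subseteq> insert x X" using D(1) xy y by auto
    next
      fix p q assume "p \<in> insert {x,y} M" "q \<in> insert {x,y} M" "p \<noteq> q"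
      moreover have "r \<inter> {x,y} = {}" if "r \<in> M" for r using D(1)[OF that] x by auto
      ultimately show "p \<inter> q = {}" using D(2) by (metis Int_commute insert_iff)
    next
      show "\<Union>(insert {x,y} M) = insert x X" using D(3) y by auto
    qed
  next
    fix N assume N: "N \<in> perfect_matchings (insert x X)"
    note D = pm_memD[OF N]
    have "x \<in> \<Union>N" using D(3) by auto
    then obtain p where p: "p \<in> N" "x \<in> p" by auto
    then have "card p = 2" using D(1) by auto
    then obtain u v where uv: "p = {u,v}" "u \<noteq> v" by (metis card_2_iff)
    obtain y where py: "p = {x,y}" "x \<noteq> y" using uv p(2) by auto
    have yX: "y \<in> X" using D(1)[OF p(1)] py by auto
    let ?M = "N - {p}"
    have "?M \<in> perfect_matchings (X - {y})"
      unfolding perfect_matchings_def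
    proof (intro CollectI conjI ballI impI)
      fix q assume q: "q \<in> ?M"
      then show "card q = 2" using D(1) by auto
    next
      fix q assume q: "q \<in> ?M"
      then have "q \<inter> p = {}" using D(2) p(1) by auto
      then show "q \<subseteq> X - {y}" using D(1) q py by auto
    next
      fix q r assume "q \<in> ?M" "r \<in> ?M" "q \<noteq> r" then show "q \<inter> r = {}" using D(2) by auto
    next
      show "\<Union>?M = X - {y}"
      proof
        show "\<Union>?M \<subseteq> X - {y}"
        proof
          fix z assume "z \<in> \<Union>?M"
          then obtain q where q: "q \<in> N" "q \<noteq> p" "z \<in> q" by auto
          have "q \<inter> p = {}" using D(2) q p(1) by auto
          then show "z \<in> X - {y}" using q D(1) py by auto
        qed
        show "X - {y} \<subseteq> \<Union>?M"
        proof
          fix z assume z: "z \<in> X - {y}"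
          then have "z \<in> \<Union>N" using D(3) by auto
          then obtain q where "q \<in> N" "z \<in> q" by auto
          moreover have "z \<notin> p" using z py x by auto
          ultimately show "z \<in> \<Union>?M" by auto
        qed
      qed
    qed
    moreover have "N = insert {x,y} ?M" using p(1) py by auto
    ultimately show "N \<in> (\<lambda>(y,M). insert {x,y} M) ` (Sigma X (\<lambda>y. perfect_matchings (X - {y})))"
      using yX by (auto intro!: image_eqI[where x="(y, N - {p})"])
  qed
qed

definition dd :: "nat \<Rightarrow> nat" where "dd k = (\<Prod>i<k. 2*i+1)"

lemma card_pm:
  "finite X \<Longrightarrow> card X = 2 * k \<Longrightarrow> card (perfect_matchings X) = dd k"
proof (induction k arbitrary: X)
  case 0
  then show ?case by (simp add: pm_empty dd_def)
next
  case (Suc k)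
  then have "X \<noteq> {}" by auto
  then obtain x where x: "x \<in> X" by blast
  define Y where "Y = X - {x}"
  have Y: "finite Y" "x \<notin> Y" "X = insert x Y" "card Y = 2*k+1" using Suc.prems x by (auto simp: Y_def)
  have "card (perfect_matchings X) = card (Sigma Y (\<lambda>y. perfect_matchings (Y - {y})))"
    using bij_betw_same_card[OF pm_insert_bij[OF Y(1,2)]] Y(3) by simp
  also have "\<dots> = (\<Sum>y\<in>Y. card (perfect_matchings (Y - {y})))"
    by (rule card_SigmaI) (use Y(1) pm_finite in auto)
  also have "\<dots> = (\<Sum>y\<in>Y. dd k)"
    by (rule sum.cong) (use Suc.IH Y in auto)
  also have "\<dots> = dd (Suc k)" using Y(4) by (simp add: dd_def)
  finally show ?case .
qed




definition adjp :: "nat set \<Rightarrow> bool" where "adjp p \<longleftrightarrow> (\<exists>i. p = {i, Suc i})"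

definition DD :: "nat \<Rightarrow> nat set set set" where
  "DD n = {S. (\<forall>p\<in>S. adjp p \<and> p \<subseteq> {0..<n}) \<and> (\<forall>p\<in>S. \<forall>q\<in>S. p \<noteq> q \<longrightarrow> p \<inter> q = {})}"

lemma DD_finite: "finite (DD n)"
  by (rule finite_subset[of _ "Pow (Pow {0..<n})"]) (auto simp: DD_def)

lemma adjp_card: "adjp p \<Longrightarrow> card p = 2"
  by (auto simp: adjp_def)

lemma DD_pm: "S \<in> DD n \<Longrightarrow> S \<in> perfect_matchings (\<Union>S)"
  unfolding DD_def perfect_matchings_def by (auto simp: adjp_card)

lemma DD_card:
  assumes "S \<in> DD n"
  shows "card (\<Union>S) = 2 * card S" "finite S" "\<Union>S \<subseteq> {0..<n}"
proof -
  have u: "\<Union>S \<subseteq> {0..<n}" using assms by (auto simp: DD_def)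
  then have f: "finite (\<Union>S)" using finite_subset by blast
  show "card (\<Union>S) = 2 * card S" "finite S" using pm_card[OF DD_pm[OF assms] f] by auto
  show "\<Union>S \<subseteq> {0..<n}" by (rule u)
qed

lemma DD_le: "S \<in> DD n \<Longrightarrow> 2 * card S \<le> n"
  using DD_card[of S n] card_mono[of "{0..<n}" "\<Union>S"] by auto

lemma DD_0: "DD 0 = {{}}"
  unfolding DD_def by (auto simp: adjp_def)

lemma DD_1: "DD (Suc 0) = {{}}"
  unfolding DD_def by (auto simp: adjp_def)

lemma DD_memD:
  assumes "S \<in> DD n"
  shows "\<And>p. p \<in> S \<Longrightarrow> adjp p" "\<And>p. p \<in> S \<Longrightarrow> p \<subseteq> {0..<n}"
    "\<And>p q. p \<in> S \<Longrightarrow> q \<in> S \<Longrightarrow> p \<noteq> q \<Longrightarrow> p \<inter> q = {}"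
  using assms unfolding DD_def by auto

lemma DD_notin: "{n, Suc n} \<notin> S" if "S \<in> DD n" for S
proof
  assume "{n, Suc n} \<in> S"
  from DD_memD(2)[OF that this] show False by auto
qed

lemma DD_SS_disj: "{n, Suc n} \<notin> S" if "S \<in> DD (Suc n)" for S
proof
  assume "{n, Suc n} \<in> S"
  from DD_memD(2)[OF that this] show False by auto
qed

lemma DD_SS:
  "DD (Suc (Suc n)) = DD (Suc n) \<union> insert {n, Suc n} ` DD n"
proof (intro equalityI subsetI)
  fix S assume S: "S \<in> DD (Suc (Suc n))"
  note SD = DD_memD[OF S]
  show "S \<in> DD (Suc n) \<union> insert {n, Suc n} ` DD n"
  proof (cases "{n, Suc n} \<in> S")
    case True
    have "S - {{n, Suc n}} \<in> DD n"
      unfolding DD_def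
    proof (intro CollectI conjI ballI impI)
      fix p assume p: "p \<in> S - {{n, Suc n}}"
      then show "adjp p" using SD by auto
      have "p \<inter> {n, Suc n} = {}" using SD(3)[OF _ True, of p] p by auto
      moreover have "p \<subseteq> {0..<Suc (Suc n)}" using SD(2) p by auto
      ultimately show "p \<subseteq> {0..<n}" by (auto simp: less_Suc_eq)
    next
      fix p q assume "p \<in> S - {{n, Suc n}}" "q \<in> S - {{n, Suc n}}" "p \<noteq> q"
      then show "p \<inter> q = {}" using SD(3) by auto
    qed
    moreover have "S = insert {n, Suc n} (S - {{n, Suc n}})" using True by auto
    ultimately show ?thesis by blast
  next
    case False
    have "S \<in> DD (Suc n)"
      unfolding DD_def
    proof (intro CollectI conjI ballI impI)
      fix p assume p: "p \<in> S"
      then show "adjp p" using SD by auto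
      then obtain i where i: "p = {i, Suc i}" by (auto simp: adjp_def)
      have "p \<subseteq> {0..<Suc (Suc n)}" using SD(2) p by auto
      then have "Suc i < Suc (Suc n)" using i by auto
      moreover have "i \<noteq> n" using False p i by auto
      ultimately show "p \<subseteq> {0..<Suc n}" using i by auto
    next
      fix p q assume "p \<in> S" "q \<in> S" "p \<noteq> q"
      then show "p \<inter> q = {}" using SD(3) by auto
    qed
    then show ?thesis by blast
  qed
next
  fix S assume "S \<in> DD (Suc n) \<union> insert {n, Suc n} ` DD n"
  then show "S \<in> DD (Suc (Suc n))"
  proof
    assume S: "S \<in> DD (Suc n)"
    note SD = DD_memD[OF S]
    show ?thesis unfolding DD_def
    proof (intro CollectI conjI ballI impI)
      fix p assume "p \<in> S" then show "adjp p" using SD by auto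
    next
      fix p assume "p \<in> S" then show "p \<subseteq> {0..<Suc (Suc n)}" using SD(2) by fastforce
    next
      fix p q assume "p \<in> S" "q \<in> S" "p \<noteq> q" then show "p \<inter> q = {}" using SD(3) by auto
    qed
  next
    assume "S \<in> insert {n, Suc n} ` DD n"
    then obtain T where T: "T \<in> DD n" "S = insert {n, Suc n} T" by auto
    note TD = DD_memD[OF T(1)]
    have dis: "p \<inter> {n, Suc n} = {}" if "p \<in> T" for p using TD(2)[OF that] by auto
    have a: "adjp {n, Suc n}" by (auto simp: adjp_def)
    show ?thesis unfolding DD_def T(2)
    proof (intro CollectI conjI ballI impI)
      fix p assume "p \<in> insert {n, Suc n} T"
      then show "adjp p" using a TD by auto
    next
      fix p assume "p \<in> insert {n, Suc n} T"
      then show "p \<subseteq> {0..<Suc (Suc n)}" using TD(2) by fastforce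
    next
      fix p q assume "p \<in> insert {n, Suc n} T" "q \<in> insert {n, Suc n} T" "p \<noteq> q"
      then show "p \<inter> q = {}" using TD(3) dis
        by (metis Int_commute insert_iff)
    qed
  qed
qed

definition cnt :: "nat \<Rightarrow> nat \<Rightarrow> nat" where
  "cnt n j = card {S \<in> DD n. card S = j}"

lemma cnt_0: "cnt n 0 = 1"
proof -
  have c: "S = {}" if "S \<in> DD n" "card S = 0" for S using DD_card(2)[OF that(1)] that(2) by simp
  have e: "{} \<in> DD n" by (simp add: DD_def)
  have "{S \<in> DD n. card S = 0} = {{}}"
  proof (intro equalityI subsetI)
    fix S assume "S \<in> {S \<in> DD n. card S = 0}" then show "S \<in> {{}}" using c by simp
  next
    fix S :: "nat set set" assume "S \<in> {{}}" then show "S \<in> {S \<in> DD n. card S = 0}" using e by simp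
  qed
  then show ?thesis by (simp add: cnt_def)
qed

lemma cnt_small: "cnt 0 (Suc j) = 0" "cnt (Suc 0) (Suc j) = 0"
  by (simp_all add: cnt_def DD_0 DD_1)

lemma cnt_SS: "cnt (Suc (Suc n)) (Suc j) = cnt (Suc n) (Suc j) + cnt n j"
proof -
  let ?A = "{S \<in> DD (Suc n). card S = Suc j}"
  let ?B = "{S \<in> DD n. card S = j}"
  have ci: "card (insert {n, Suc n} T) = Suc (card T)" if "T \<in> DD n" for T
  proof -
    have "{n, Suc n} \<notin> T" using DD_notin[OF that] .
    then show ?thesis by (simp add: DD_card(2)[OF that])
  qed
  have eq: "{S \<in> DD (Suc (Suc n)). card S = Suc j} = ?A \<union> insert {n, Suc n} ` ?B"
  proof (intro equalityI subsetI)
    fix S assume "S \<in> {S \<in> DD (Suc (Suc n)). card S = Suc j}"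
    then have S: "S \<in> DD (Suc n) \<union> insert {n, Suc n} ` DD n" "card S = Suc j" using DD_SS by auto
    from S(1) show "S \<in> ?A \<union> insert {n, Suc n} ` ?B"
    proof
      assume "S \<in> DD (Suc n)" then show ?thesis using S(2) by blast
    next
      assume "S \<in> insert {n, Suc n} ` DD n"
      then obtain T where T: "T \<in> DD n" "S = insert {n, Suc n} T" by blast
      then have "card T = j" using ci[OF T(1)] S(2) by simp
      then show ?thesis using T by blast
    qed
  next
    fix S assume "S \<in> ?A \<union> insert {n, Suc n} ` ?B"
    then show "S \<in> {S \<in> DD (Suc (Suc n)). card S = Suc j}"
    proof
      assume "S \<in> ?A" then show ?thesis using DD_SS by blast
    next
      assume "S \<in> insert {n, Suc n} ` ?B"
      then obtain T where T: "T \<in> DD n" "card T = j" "S = insert {n, Suc n} T" by blast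
      then have "card S = Suc j" using ci[OF T(1)] by simp
      moreover have "S \<in> DD (Suc (Suc n))" using T DD_SS by blast
      ultimately show ?thesis by blast
    qed
  qed
  have inj: "inj_on (insert {n, Suc n}) ?B"
  proof (rule inj_onI)
    fix S T assume S: "S \<in> ?B" and T: "T \<in> ?B" and e: "insert {n, Suc n} S = insert {n, Suc n} T"
    have "{n, Suc n} \<notin> S" using DD_notin[of S n] S by simp
    moreover have "{n, Suc n} \<notin> T" using DD_notin[of T n] T by simp
    ultimately show "S = T" using e by (metis insert_ident)
  qed
  have dis: "?A \<inter> insert {n, Suc n} ` ?B = {}"
  proof -
    have "{n, Suc n} \<notin> S" if "S \<in> ?A" for S using DD_SS_disj[of S n] that by simp
    then show ?thesis by blast
  qed
  have fA: "finite ?A" and fB: "finite ?B" using DD_finite by auto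
  have "cnt (Suc (Suc n)) (Suc j) = card (?A \<union> insert {n, Suc n} ` ?B)" unfolding cnt_def eq ..
  also have "\<dots> = card ?A + card (insert {n, Suc n} ` ?B)"
    by (rule card_Un_disjoint) (use fA fB dis in auto)
  also have "\<dots> = cnt (Suc n) (Suc j) + cnt n j" unfolding cnt_def card_image[OF inj] ..
  finally show ?thesis .
qed

lemma cnt_binom: "cnt n j = (n - j) choose j \<and> cnt (Suc n) j = (Suc n - j) choose j"
proof (induction n arbitrary: j)
  case 0
  then show ?case by (cases j) (auto simp: cnt_0 cnt_small)
next
  case (Suc n)
  show ?case
  proof (cases j)
    case 0 then show ?thesis by (simp add: cnt_0)
  next
    case (Suc i)
    have "cnt (Suc (Suc n)) (Suc i) = ((Suc n - Suc i) choose Suc i) + ((n - i) choose i)"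
      using cnt_SS Suc.IH by simp
    also have "\<dots> = ((Suc (Suc n) - Suc i) choose Suc i)"
    proof (cases "i \<le> n")
      case True
      then have "Suc (Suc n) - Suc i = Suc (n - i)" "Suc n - Suc i = n - i" by auto
      then show ?thesis by simp
    next
      case False
      then show ?thesis by (simp add: binomial_eq_0)
    qed
    finally show ?thesis using Suc.IH Suc by simp
  qed
qed




lemma T_prod:
  fixes b :: "'a::comm_ring_1"
  assumes "M \<in> perfect_matchings {0..<n}"
  shows "(\<Prod>p\<in>M. T_mat n b (Min p) (Max p)) = (\<Prod>p\<in>M. (if adjp p then 1 else 0) + b)"
proof (rule prod.cong[OF refl])
  fix p assume "p \<in> M"
  then have "card p = 2" using pm_memD(1)[OF assms] by auto
  then obtain x y where xy: "p = {x,y}" "x \<noteq> y" by (metis card_2_iff)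
  obtain i j where ij: "p = {i,j}" "i < j"
  proof (cases "x < y")
    case True then show ?thesis using that xy by blast
  next
    case False then have "y < x" using xy by auto
    then show ?thesis using that xy by (metis insert_commute)
  qed
  have "Min p = i" "Max p = j" using ij by auto
  moreover have "adjp p \<longleftrightarrow> j = Suc i" using ij unfolding adjp_def by (auto simp: doubleton_eq_iff)
  ultimately show "T_mat n b (Min p) (Max p) = (if adjp p then 1 else 0) + b"
    using ij by (auto simp: T_mat_def add.commute)
qed

lemma prod_ind:
  assumes "finite X"
  shows "(\<Prod>p\<in>X. (if adjp p then 1 else 0)::'a::comm_ring_1) = (if X \<subseteq> {p. adjp p} then 1 else 0)"
proof (cases "X \<subseteq> {p. adjp p}")
  case True then show ?thesis by (auto intro!: prod.neutral)
next
  case False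
  then obtain p where "p \<in> X" "\<not> adjp p" by auto
  then show ?thesis using False assms by (auto intro!: prod_zero)
qed

lemma sum_ind:
  fixes b :: "'a::comm_ring_1"
  assumes M: "M \<in> perfect_matchings {0..<2*m}"
  shows "(\<Prod>p\<in>M. (if adjp p then 1 else 0) + b) = (\<Sum>X\<in>{X\<in>DD (2*m). X \<subseteq> M}. b ^ (m - card X))"
proof -
  have fM: "finite M" and cM: "card M = m" using pm_card[OF M] by auto
  have "(\<Prod>p\<in>M. (if adjp p then 1 else 0) + b) =
        (\<Sum>X\<in>Pow M. (\<Prod>p\<in>X. if adjp p then 1 else 0) * (\<Prod>p\<in>M-X. b))"
    by (rule prod_add[OF fM])
  also have "\<dots> = (\<Sum>X\<in>Pow M. if X \<subseteq> {p. adjp p} then b ^ (m - card X) else 0)"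
  proof (rule sum.cong[OF refl])
    fix X assume X: "X \<in> Pow M"
    then have fX: "finite X" using fM finite_subset by auto
    have "(\<Prod>p\<in>M-X. b) = b ^ (m - card X)" using fM X cM by (simp add: card_Diff_subset fX)
    then show "(\<Prod>p\<in>X. if adjp p then 1 else 0) * (\<Prod>p\<in>M-X. b) =
        (if X \<subseteq> {p. adjp p} then b ^ (m - card X) else 0)" by (simp add: prod_ind[OF fX])
  qed
  also have "\<dots> = (\<Sum>X\<in>{X\<in>Pow M. X \<subseteq> {p. adjp p}}. b ^ (m - card X))"
    by (rule sum.inter_filter[symmetric]) (use fM in simp)
  also have "{X\<in>Pow M. X \<subseteq> {p. adjp p}} = {X\<in>DD (2*m). X \<subseteq> M}"
    using pm_memD[OF M] unfolding DD_def by blast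
  finally show ?thesis .
qed

lemma card_ext:
  assumes X: "X \<in> DD n"
  shows "card {M \<in> perfect_matchings {0..<n}. X \<subseteq> M} = card (perfect_matchings ({0..<n} - \<Union>X))"
proof (rule bij_betw_same_card[of "\<lambda>M. M - X"], rule bij_betw_byWitness[where f'="\<lambda>M. M \<union> X"])
  have XA: "\<And>p. p \<in> X \<Longrightarrow> card p = 2 \<and> p \<subseteq> {0..<n}" using X by (auto simp: DD_def adjp_card)
  have XB: "\<And>p q. p \<in> X \<Longrightarrow> q \<in> X \<Longrightarrow> p \<noteq> q \<Longrightarrow> p \<inter> q = {}" using X by (auto simp: DD_def)
  have XU: "\<Union>X \<subseteq> {0..<n}" using XA by auto
  show "\<forall>M\<in>{M \<in> perfect_matchings {0..<n}. X \<subseteq> M}. M - X \<union> X = M" by auto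
  show "\<forall>M'\<in>perfect_matchings ({0..<n} - \<Union>X). M' \<union> X - X = M'"
  proof
    fix M' assume M': "M' \<in> perfect_matchings ({0..<n} - \<Union>X)"
    have "p \<notin> X" if "p \<in> M'" for p
    proof
      assume "p \<in> X"
      then have "p \<subseteq> \<Union>X" by auto
      moreover have "card p = 2" "p \<subseteq> {0..<n} - \<Union>X" using pm_memD(1)[OF M' that] by auto
      ultimately have "p = {}" by blast
      with \<open>card p = 2\<close> show False by simp
    qed
    then show "M' \<union> X - X = M'" by auto
  qed
  show "(\<lambda>M. M - X) ` {M \<in> perfect_matchings {0..<n}. X \<subseteq> M} \<subseteq> perfect_matchings ({0..<n} - \<Union>X)"
  proof (rule image_subsetI)
    fix M assume "M \<in> {M \<in> perfect_matchings {0..<n}. X \<subseteq> M}"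
    then have M: "M \<in> perfect_matchings {0..<n}" and XM: "X \<subseteq> M" by auto
    note D = pm_memD[OF M]
    have dis: "p \<inter> \<Union>X = {}" if "p \<in> M - X" for p
      using D(2) that XM by blast
    show "M - X \<in> perfect_matchings ({0..<n} - \<Union>X)"
      unfolding perfect_matchings_def
    proof (intro CollectI conjI ballI impI)
      fix p assume "p \<in> M - X" then show "card p = 2" using D(1) by auto
    next
      fix p assume p: "p \<in> M - X" then show "p \<subseteq> {0..<n} - \<Union>X" using D(1) dis[OF p] by auto
    next
      fix p q assume "p \<in> M - X" "q \<in> M - X" "p \<noteq> q" then show "p \<inter> q = {}" using D(2) by auto
    next
      show "\<Union>(M - X) = {0..<n} - \<Union>X"
      proof
        show "\<Union>(M - X) \<subseteq> {0..<n} - \<Union>X"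
        proof
          fix z assume "z \<in> \<Union>(M - X)"
          then obtain p where p: "p \<in> M - X" "z \<in> p" by blast
          then show "z \<in> {0..<n} - \<Union>X" using D(1)[of p] dis[OF p(1)] by blast
        qed
        show "{0..<n} - \<Union>X \<subseteq> \<Union>(M - X)"
        proof
          fix z assume z: "z \<in> {0..<n} - \<Union>X"
          then obtain p where p: "p \<in> M" "z \<in> p" using D(3) by blast
          then have "p \<notin> X" using z by blast
          then show "z \<in> \<Union>(M - X)" using p by blast
        qed
      qed
    qed
  qed
  show "(\<lambda>M. M \<union> X) ` perfect_matchings ({0..<n} - \<Union>X) \<subseteq> {M \<in> perfect_matchings {0..<n}. X \<subseteq> M}"
  proof (rule image_subsetI)
    fix M' assume M': "M' \<in> perfect_matchings ({0..<n} - \<Union>X)"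
    note D = pm_memD[OF M']
    have "M' \<union> X \<in> perfect_matchings {0..<n}"
      unfolding perfect_matchings_def
    proof (intro CollectI conjI ballI impI)
      fix p assume "p \<in> M' \<union> X" then show "card p = 2" using D(1) XA by auto
    next
      fix p assume "p \<in> M' \<union> X" then show "p \<subseteq> {0..<n}" using D(1) XA by blast
    next
      fix p q assume pq: "p \<in> M' \<union> X" "q \<in> M' \<union> X" "p \<noteq> q"
      have c: "p \<inter> q = {}" if "p \<in> M'" "q \<in> X" for p q
        using D(1)[OF that(1)] that(2) by blast
      show "p \<inter> q = {}"
      proof (cases "p \<in> M'")
        case True
        show ?thesis
        proof (cases "q \<in> M'")
          case True then show ?thesis using D(2) pq \<open>p \<in> M'\<close> by auto
        next
          case False then show ?thesis using c[OF \<open>p \<in> M'\<close>] pq by auto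
        qed
      next
        case False
        then have pX: "p \<in> X" using pq by auto
        show ?thesis
        proof (cases "q \<in> M'")
          case True then show ?thesis using c[OF True pX] by auto
        next
          case False then show ?thesis using XB pX pq by auto
        qed
      qed
    next
      show "\<Union>(M' \<union> X) = {0..<n}" using D(3) XU by auto
    qed
    then show "M' \<union> X \<in> {M \<in> perfect_matchings {0..<n}. X \<subseteq> M}" by auto
  qed
qed

lemma card_ext2:
  assumes X: "X \<in> DD (2*m)"
  shows "card {M \<in> perfect_matchings {0..<2*m}. X \<subseteq> M} = dd (m - card X)"
proof -
  have "card ({0..<2*m} - \<Union>X) = 2 * m - 2 * card X"
    using DD_card[OF X] by (simp add: card_Diff_subset finite_subset)
  also have "\<dots> = 2 * (m - card X)" by simp
  finally show ?thesis unfolding card_ext[OF X] by (rule card_pm[rotated]) simp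
qed

lemma fact_dd: "fact (2*k) = (2^k * fact k * dd k :: nat)"
proof (induction k)
  case 0 then show ?case by (simp add: dd_def)
next
  case (Suc k)
  have "fact (2 * Suc k) = (2*k+2) * ((2*k+1) * (fact (2*k) :: nat))"
    by (simp add: algebra_simps)
  then show ?case using Suc.IH by (simp add: dd_def algebra_simps)
qed

lemma coef:
  assumes "k \<le> m"
  shows "((m+k) choose (m-k)) * dd k = fact (m + k) div (fact k * fact (m - k) * 2 ^ k)"
proof -
  have c: "(m+k) choose (m-k) = (m+k) choose (2*k)"
    using binomial_symmetric[of "2*k" "m+k"] assms by simp
  have "fact (2*k) * fact (m-k) * ((m+k) choose (2*k)) = (fact (m+k) :: nat)"
    using binomial_fact_lemma[of "2*k" "m+k"] assms by simp
  then have "fact (m+k) = ((m+k) choose (m-k)) * dd k * (fact k * fact (m - k) * 2 ^ k)"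
    unfolding c fact_dd by (simp add: algebra_simps)
  then show ?thesis by simp
qed




theorem mainTheorem4:
  fixes b :: "'a::comm_ring_1" and m :: nat
  assumes "m \<ge> 1"
  shows "hafnian (2 * m) (T_mat (2 * m) b) = bessel_poly m b"
proof -
  let ?P = "perfect_matchings {0..<2*m}"
  let ?D = "DD (2*m)"
  have fP: "finite ?P" by (rule pm_finite) simp
  have fD: "finite ?D" by (rule DD_finite)
  have "hafnian (2 * m) (T_mat (2 * m) b) = (\<Sum>M\<in>?P. \<Sum>X\<in>{X\<in>?D. X \<subseteq> M}. b ^ (m - card X))"
    unfolding hafnian_def by (rule sum.cong[OF refl]) (simp add: T_prod sum_ind)
  also have "\<dots> = (\<Sum>X\<in>?D. \<Sum>M\<in>{M\<in>?P. X \<subseteq> M}. b ^ (m - card X))"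
    using sum.swap_restrict[OF fP fD, of "\<lambda>M X. b ^ (m - card X)" "\<lambda>M X. X \<subseteq> M"] by simp
  also have "\<dots> = (\<Sum>X\<in>?D. of_nat (dd (m - card X)) * b ^ (m - card X))"
    by (rule sum.cong[OF refl]) (simp add: card_ext2)
  also have "\<dots> = (\<Sum>j\<in>{0..m}. \<Sum>X\<in>{X\<in>?D. card X = j}. of_nat (dd (m - card X)) * b ^ (m - card X))"
  proof (rule sum.group[symmetric])
    show "card ` ?D \<subseteq> {0..m}"
    proof
      fix j assume "j \<in> card ` ?D"
      then obtain X where "X \<in> ?D" "j = card X" by blast
      then show "j \<in> {0..m}" using DD_le[of X "2*m"] by simp
    qed
  qed (use fD in auto)
  also have "\<dots> = (\<Sum>j\<in>{0..m}. of_nat (cnt (2*m) j * dd (m - j)) * b ^ (m - j))"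
    by (rule sum.cong[OF refl]) (simp add: cnt_def)
  also have "\<dots> = (\<Sum>j\<in>{0..m}. of_nat (((2*m - j) choose j) * dd (m - j)) * b ^ (m - j))"
    using cnt_binom by simp
  also have "\<dots> = (\<Sum>k\<in>{0..m}. of_nat (((m + k) choose (m - k)) * dd k) * b ^ k)"
  proof (subst sum.atLeastAtMost_rev, rule sum.cong[OF refl])
    fix k assume "k \<in> {0..m}"
    then have "2*m - (m + 0 - k) = m + k" "m - (m + 0 - k) = k" by auto
    then show "of_nat (((2*m - (m + 0 - k)) choose (m + 0 - k)) * dd (m - (m + 0 - k))) * b ^ (m - (m + 0 - k))
      = of_nat (((m + k) choose (m - k)) * dd k) * b ^ k" by simp
  qed
  also have "\<dots> = bessel_poly m b"
    unfolding bessel_poly_def by (rule sum.cong[OF refl]) (simp add: coef)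
  finally show ?thesis .
qed


end
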